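(* Suppose $X$ and $Y$ are independent real random variables, where $X$ has a symmetric, unimodal density. Then $\mathrm{MAD}(X)\le\mathrm{MAD}(X+Y)$.
   Context: For a random variable $Z$, $\mathrm{med}(Z)$ denotes its median and the median absolute deviation is $\mathrm{MAD}(Z)=\mathrm{med}\big(|Z-\mathrm{med}(Z)|\big)$. *)

theory Defs
  imports "HOL-Probability.Probability"
begin

text \<open>Median of a real random variable Z on M (convention: the lower median,
  i.e. the smallest t with P(Z \<le> t) \<ge> 1/2).\<close>
definition med :: "'a measure \<Rightarrow> ('a \<Rightarrow> real) \<Rightarrow> real" where
  "med M Z = Inf {t. 1/2 \<le> measure M {\<omega> \<in> space M. Z \<omega> \<le> t}}"

definition MAD :: "'a measure \<Rightarrow> ('a \<Rightarrow> real) \<Rightarrow> real" where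
  "MAD M Z = med M (\<lambda>\<omega>. \<bar>Z \<omega> - med M Z\<bar>)"

definition symmetric_unimodal :: "(real \<Rightarrow> ennreal) \<Rightarrow> real \<Rightarrow> bool" where
  "symmetric_unimodal f c \<longleftrightarrow>
     (\<forall>x. f (c + x) = f (c - x)) \<and>
     (\<forall>x y. x \<le> y \<and> y \<le> c \<longrightarrow> f x \<le> f y) \<and>
     (\<forall>x y. c \<le> x \<and> x \<le> y \<longrightarrow> f y \<le> f x)"

end

theory Submission imports Defs begin

lemma su_props:
  assumes "symmetric_unimodal f c"
  shows "\<And>x. f (2*c - x) = f x" "\<And>x y. x \<le> y \<Longrightarrow> y \<le> c \<Longrightarrow> f x \<le> f y"
    "\<And>x y. c \<le> x \<Longrightarrow> x \<le> y \<Longrightarrow> f y \<le> f x"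
proof -
  fix x
  have "f (c + (c - x)) = f (c - (c - x))" using assms unfolding symmetric_unimodal_def by blast
  then show "f (2*c - x) = f x" by (simp add: algebra_simps mult_2)
qed (use assms in \<open>auto simp: symmetric_unimodal_def\<close>)

lemma pw1:
  assumes "symmetric_unimodal f c" "0 \<le> t" "c - t < x"
  shows "f (x + 2*t) \<le> f x"
proof (cases "c \<le> x")
  case True then show ?thesis using su_props(3)[OF assms(1), of x "x+2*t"] assms by simp
next
  case False
  have "f (x + 2*t) \<le> f (2*c - x)" using su_props(3)[OF assms(1), of "2*c-x" "x+2*t"] assms False by simp
  then show ?thesis using su_props(1)[OF assms(1)] by simp
qed

lemma pw2:
  assumes "symmetric_unimodal f c" "0 \<le> t" "x \<le> c - t"
  shows "f x \<le> f (x + 2*t)"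
proof (cases "x + 2*t \<le> c")
  case True then show ?thesis using su_props(2)[OF assms(1), of x "x+2*t"] assms by simp
next
  case False
  have "f x \<le> f (2*c - (x + 2*t))" using su_props(2)[OF assms(1), of x "2*c-(x+2*t)"] assms False by simp
  then show ?thesis using su_props(1)[OF assms(1)] by simp
qed

lemma shift_int:
  fixes f :: "real \<Rightarrow> ennreal"
  assumes [measurable]: "f \<in> borel_measurable borel"
  shows "(\<integral>\<^sup>+y. f y * indicator {lo+h<..hi+h} y \<partial>lborel) = (\<integral>\<^sup>+x. f (x+h) * indicator {lo<..hi} x \<partial>lborel)"
  apply (subst nn_integral_real_affine[where c=1 and t=h])
    apply (auto intro!: nn_integral_cong simp: indicator_def add.commute)
  done

lemma refl_int:
  fixes f :: "real \<Rightarrow> ennreal"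
  assumes [measurable]: "f \<in> borel_measurable borel" and s: "symmetric_unimodal f c"
  shows "(\<integral>\<^sup>+y. f y * indicator {..c} y \<partial>lborel) = (\<integral>\<^sup>+x. f x * indicator {c..} x \<partial>lborel)"
  apply (subst nn_integral_real_affine[where c="-1" and t="2*c"])
    apply (auto intro!: nn_integral_cong simp: indicator_def su_props(1)[OF s])
  done


context
  fixes M :: "'a measure" and X :: "'a \<Rightarrow> real" and f :: "real \<Rightarrow> ennreal" and c :: real
  assumes PM: "prob_space M" and DX: "distributed M lborel X f" and SU: "symmetric_unimodal f c"
begin

lemma fmeas[measurable]: "f \<in> borel_measurable borel"
  using DX by (simp add: distributed_def)

lemma Xmeas[measurable]: "X \<in> borel_measurable M"
  using DX by (simp add: distributed_def)

lemma D_eq: "distr M lborel X = density lborel f"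
  using DX by (simp add: distributed_def)

lemma D_prob: "prob_space (density lborel f)"
  using prob_space.prob_space_distr[OF PM, of X lborel] D_eq by simp

lemma D_meas: "A \<in> sets borel \<Longrightarrow> measure M (X -` A \<inter> space M) = measure (density lborel f) A"
  using D_eq[symmetric] by (simp add: measure_distr)

lemma D_em: "A \<in> sets borel \<Longrightarrow> emeasure (density lborel f) A = (\<integral>\<^sup>+x. f x * indicator A x \<partial>lborel)"
  by (simp add: emeasure_density)

lemma D_single: "measure (density lborel f) {x} = 0"
proof -
  have "emeasure (density lborel f) {x} = 0"
    apply (subst D_em, simp)
    apply (rule nn_integral_zero'[OF eventually_mono[OF AE_lborel_singleton[of x]]])
    apply auto done
  then show ?thesis by (simp add: measure_def)
qed

lemma G_cc: "lo \<le> hi \<Longrightarrow> measure (density lborel f) {lo..hi} = measure (density lborel f) {..hi} - measure (density lborel f) {..lo}"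
proof -
  interpret P: prob_space "density lborel f" by (rule D_prob)
  assume "lo \<le> hi"
  then have "{..hi} = {..<lo} \<union> {lo..hi}" by auto
  then have 1: "measure (density lborel f) {..hi} = measure (density lborel f) {..<lo} + measure (density lborel f) {lo..hi}"
    using P.finite_measure_Union[of "{..<lo}" "{lo..hi}"] by (simp add: disjoint_iff)
  have "{..lo} = {..<lo} \<union> {lo}" by auto
  then have 2: "measure (density lborel f) {..lo} = measure (density lborel f) {..<lo}"
    using P.finite_measure_Union[of "{..<lo}" "{lo}"] D_single[of lo] by (simp add: disjoint_iff)
  show ?thesis using 1 2 by simp
qed

lemma G_oc: "lo \<le> hi \<Longrightarrow> measure (density lborel f) {lo<..hi} = measure (density lborel f) {..hi} - measure (density lborel f) {..lo}"
proof -
  interpret P: prob_space "density lborel f" by (rule D_prob)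
  assume "lo \<le> hi"
  then have "{..hi} = {..lo} \<union> {lo<..hi}" by auto
  then have 1: "measure (density lborel f) {..hi} = measure (density lborel f) {..lo} + measure (density lborel f) {lo<..hi}"
    using P.finite_measure_Union[of "{..lo}" "{lo<..hi}"] by (simp add: disjoint_iff)
  show ?thesis using 1 by simp
qed

lemma D_mono_int:
  assumes "(\<integral>\<^sup>+x. f x * indicator A x \<partial>lborel) \<le> (\<integral>\<^sup>+x. f x * indicator B x \<partial>lborel)"
    "A \<in> sets borel" "B \<in> sets borel"
  shows "measure (density lborel f) A \<le> measure (density lborel f) B"
proof -
  interpret P: prob_space "density lborel f" by (rule D_prob)
  have "ennreal (measure (density lborel f) A) \<le> ennreal (measure (density lborel f) B)"
    using assms D_em[of A] D_em[of B] by (simp add: P.emeasure_eq_measure)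
  then show ?thesis by (simp add: ennreal_le_iff)
qed

lemma anderson:
  assumes t: "0 \<le> t"
  shows "measure (density lborel f) {a-t..a+t} \<le> measure (density lborel f) {c-t..c+t}"
proof (cases "c \<le> a")
  case True
  have "(\<integral>\<^sup>+y. f y * indicator {(c-t)+2*t<..(a-t)+2*t} y \<partial>lborel) \<le> (\<integral>\<^sup>+x. f x * indicator {c-t<..a-t} x \<partial>lborel)"
    apply (subst shift_int, simp)
    apply (rule nn_integral_mono)
    using pw1[OF SU t] by (auto simp: indicator_def)
  then have "(\<integral>\<^sup>+y. f y * indicator {c+t<..a+t} y \<partial>lborel) \<le> (\<integral>\<^sup>+x. f x * indicator {c-t<..a-t} x \<partial>lborel)"
    by (simp add: algebra_simps mult_2)
  then have "measure (density lborel f) {c+t<..a+t} \<le> measure (density lborel f) {c-t<..a-t}"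
    by (rule D_mono_int) auto
  then show ?thesis using True t by (simp add: G_cc G_oc)
next
  case False
  have "(\<integral>\<^sup>+x. f x * indicator {a-t<..c-t} x \<partial>lborel) \<le> (\<integral>\<^sup>+y. f y * indicator {(a-t)+2*t<..(c-t)+2*t} y \<partial>lborel)"
    apply (subst shift_int, simp)
    apply (rule nn_integral_mono)
    using pw2[OF SU t] by (auto simp: indicator_def)
  then have "(\<integral>\<^sup>+x. f x * indicator {a-t<..c-t} x \<partial>lborel) \<le> (\<integral>\<^sup>+y. f y * indicator {a+t<..c+t} y \<partial>lborel)"
    by (simp add: algebra_simps mult_2)
  then have "measure (density lborel f) {a-t<..c-t} \<le> measure (density lborel f) {a+t<..c+t}"
    by (rule D_mono_int) auto
  then show ?thesis using False t by (simp add: G_cc G_oc)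
qed

lemma half: "measure (density lborel f) {..c} = 1/2"
proof -
  interpret P: prob_space "density lborel f" by (rule D_prob)
  have "measure (density lborel f) {..c} = measure (density lborel f) {c..}"
    using refl_int[OF fmeas SU] D_em[of "{..c}"] D_em[of "{c..}"] by (simp add: measure_def)
  moreover have "UNIV = {..c} \<union> {c<..}" by auto
  then have "1 = measure (density lborel f) {..c} + measure (density lborel f) {c<..}"
    using P.prob_space P.finite_measure_Union[of "{..c}" "{c<..}"] by (simp add: disjoint_iff)
  moreover have "{c..} = {c} \<union> {c<..}" by auto
  then have "measure (density lborel f) {c..} = measure (density lborel f) {c<..}"
    using P.finite_measure_Union[of "{c}" "{c<..}"] D_single[of c] by (simp add: disjoint_iff)
  ultimately show ?thesis by simp
qed


lemma pos:
  assumes "s < c" shows "measure (density lborel f) {s<..c} > 0"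
proof (rule ccontr)
  interpret P: prob_space "density lborel f" by (rule D_prob)
  assume "\<not> ?thesis"
  then have "measure (density lborel f) {s<..c} = 0" using measure_nonneg[of _ "{s<..c}"]
    by (meson linorder_not_le order_antisym)
  then have "emeasure (density lborel f) {s<..c} = 0" by (simp add: P.emeasure_eq_measure)
  then have "(\<integral>\<^sup>+x. f x * indicator {s<..c} x \<partial>lborel) = 0" using D_em[of "{s<..c}"] by simp
  then have AE0: "AE x in lborel. f x * indicator {s<..c} x = 0"
    by (subst (asm) nn_integral_0_iff_AE) auto
  have left: "f y = 0" if "y < c" for y
  proof (rule ccontr)
    assume fy: "f y \<noteq> 0"
    define z where "z = max y s"
    have zc: "z < c" using assms that by (simp add: z_def)
    have "AE x in lborel. x \<notin> {z<..<c}"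
    proof (rule eventually_mono[OF AE0])
      fix x assume h: "f x * indicator {s<..c} x = 0"
      show "x \<notin> {z<..<c}"
      proof
        assume x: "x \<in> {z<..<c}"
        then have "f x = 0" using h by (auto simp: z_def indicator_def)
        moreover have "f y \<le> f x" using su_props(2)[OF SU, of y x] x by (auto simp: z_def)
        ultimately show False using fy by simp
      qed
    qed
    then have "emeasure lborel {z<..<c} = 0"
      by (subst (asm) AE_iff_measurable[of "{z<..<c}"]) auto
    then show False using zc by simp
  qed
  have "\<forall>x. x \<noteq> c \<longrightarrow> f x = 0"
  proof (intro allI impI)
    fix x assume "x \<noteq> c"
    show "f x = 0"
    proof (cases "x < c")
      case True then show ?thesis by (rule left)
    next
      case False
      then have "2*c - x < c" using \<open>x \<noteq> c\<close> by simp
      then show ?thesis using left su_props(1)[OF SU, of x] by metis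
    qed
  qed
  then have "AE x in lborel. f x * indicator UNIV x = 0"
    using AE_lborel_singleton[of c] by (auto elim: eventually_mono)
  then have "(\<integral>\<^sup>+x. f x * indicator UNIV x \<partial>lborel) = 0"
    by (simp add: nn_integral_0_iff_AE)
  then have "emeasure (density lborel f) UNIV = 0" using D_em[of UNIV] by simp
  then show False using P.emeasure_space_1 by simp
qed

lemma med_X: "med M X = c"
proof -
  interpret P: prob_space "density lborel f" by (rule D_prob)
  have eq: "measure M {\<omega> \<in> space M. X \<omega> \<le> t} = measure (density lborel f) {..t}" for t
  proof -
    have "{\<omega> \<in> space M. X \<omega> \<le> t} = X -` {..t} \<inter> space M" by auto
    then show ?thesis using D_meas[of "{..t}"] by simp
  qed
  show ?thesis unfolding med_def
  proof (rule cInf_eq_minimum)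
    show "c \<in> {t. 1 / 2 \<le> measure M {\<omega> \<in> space M. X \<omega> \<le> t}}" using half eq by simp
  next
    fix t assume "t \<in> {t. 1 / 2 \<le> measure M {\<omega> \<in> space M. X \<omega> \<le> t}}"
    then have t: "1/2 \<le> measure (density lborel f) {..t}" using eq by simp
    show "c \<le> t"
    proof (rule ccontr)
      assume "\<not> c \<le> t"
      then have "t < c" by simp
      then show False using G_oc[of t c] pos[of t] half t by simp
    qed
  qed
qed

lemma XA: "measure M {\<omega> \<in> space M. \<bar>X \<omega> - a\<bar> \<le> t} \<le> measure M {\<omega> \<in> space M. \<bar>X \<omega> - c\<bar> \<le> t}"
proof -
  have eq: "measure M {\<omega> \<in> space M. \<bar>X \<omega> - b\<bar> \<le> t} = measure (density lborel f) {b-t..b+t}" for b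
  proof -
    have "{\<omega> \<in> space M. \<bar>X \<omega> - b\<bar> \<le> t} = X -` {b-t..b+t} \<inter> space M" by auto
    then show ?thesis using D_meas[of "{b-t..b+t}"] by simp
  qed
  show ?thesis
  proof (cases "0 \<le> t")
    case True then show ?thesis using eq anderson by simp
  next
    case False then show ?thesis using eq by simp
  qed
qed

end

theorem lemma15:
  fixes M :: "'a measure" and X Y :: "'a \<Rightarrow> real"
    and f :: "real \<Rightarrow> ennreal" and c :: real
  assumes "prob_space M"
    and "X \<in> borel_measurable M" and "Y \<in> borel_measurable M"
    and "prob_space.indep_var M borel X borel Y"
    and "distributed M lborel X f"
    and "symmetric_unimodal f c"
  shows "MAD M X \<le> MAD M (\<lambda>\<omega>. X \<omega> + Y \<omega>)"
proof -
  interpret prob_space M by (rule assms(1))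
  note [measurable] = assms(2,3)
  define m where "m = med M (\<lambda>\<omega>. X \<omega> + Y \<omega>)"
  define PX where "PX = distr M borel X"
  define PY where "PY = distr M borel Y"
  interpret PX: prob_space PX unfolding PX_def by (rule prob_space_distr) simp
  interpret PY: prob_space PY unfolding PY_def by (rule prob_space_distr) simp
  interpret PXY: pair_sigma_finite PX PY
    by (simp add: pair_sigma_finite_def PX.sigma_finite_measure_axioms PY.sigma_finite_measure_axioms)
  have joint: "PX \<Otimes>\<^sub>M PY = distr M (borel \<Otimes>\<^sub>M borel) (\<lambda>\<omega>. (X \<omega>, Y \<omega>))"
    using assms(4) unfolding PX_def PY_def by (simp add: indep_var_distribution_eq)
  have key: "measure M {\<omega> \<in> space M. \<bar>X \<omega> + Y \<omega> - m\<bar> \<le> t} \<le> measure M {\<omega> \<in> space M. \<bar>X \<omega> - c\<bar> \<le> t}" for t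
  proof -
    define q where "q = measure M {\<omega> \<in> space M. \<bar>X \<omega> - c\<bar> \<le> t}"
    define S where "S = {p \<in> space (borel \<Otimes>\<^sub>M borel). \<bar>fst p + snd p - m\<bar> \<le> (t::real)}"
    have g: "(\<lambda>p::real\<times>real. \<bar>fst p + snd p - m\<bar>) \<in> borel_measurable (borel \<Otimes>\<^sub>M borel)" by measurable
    have Seq: "S = (\<lambda>p::real\<times>real. \<bar>fst p + snd p - m\<bar>) -` {..t} \<inter> space (borel \<Otimes>\<^sub>M borel)" by (auto simp: S_def)
    then have S[measurable]: "S \<in> sets (borel \<Otimes>\<^sub>M borel)" by (simp only: Seq) (rule measurable_sets[OF g], simp)
    have "emeasure M {\<omega> \<in> space M. \<bar>X \<omega> + Y \<omega> - m\<bar> \<le> t} = emeasure (PX \<Otimes>\<^sub>M PY) S"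
      unfolding joint apply (subst emeasure_distr) apply simp apply (rule S) by (auto simp: S_def space_pair_measure intro!: arg_cong[where f="emeasure M"])
    also have "\<dots> = (\<integral>\<^sup>+y. emeasure PX ((\<lambda>x. (x, y)) -` S) \<partial>PY)"
      by (rule PXY.emeasure_pair_measure_alt2) (simp add: PX_def PY_def)
    also have "\<dots> \<le> (\<integral>\<^sup>+y. ennreal q \<partial>PY)"
    proof (rule nn_integral_mono)
      fix y
      have "(\<lambda>x. (x, y)) -` S = {x. \<bar>x - (m - y)\<bar> \<le> t}" by (auto simp: S_def space_pair_measure)
      then have "emeasure PX ((\<lambda>x. (x, y)) -` S) = emeasure M {\<omega> \<in> space M. \<bar>X \<omega> - (m - y)\<bar> \<le> t}"
        unfolding PX_def by (subst emeasure_distr) (auto intro!: arg_cong[where f="emeasure M"])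
      also have "\<dots> = ennreal (measure M {\<omega> \<in> space M. \<bar>X \<omega> - (m - y)\<bar> \<le> t})"
        by (simp add: emeasure_eq_measure)
      also have "\<dots> \<le> ennreal q" unfolding q_def
        using XA[OF assms(1) assms(5) assms(6), of "m - y" t] by (simp add: ennreal_leI)
      finally show "emeasure PX ((\<lambda>x. (x, y)) -` S) \<le> ennreal q" .
    qed
    also have "\<dots> = ennreal q" using PY.emeasure_space_1 by simp
    finally show ?thesis unfolding q_def by (simp add: emeasure_eq_measure ennreal_le_iff)
  qed
  define S1 where "S1 = {t. 1/2 \<le> measure M {\<omega> \<in> space M. \<bar>X \<omega> - c\<bar> \<le> t}}"
  define S2 where "S2 = {t. 1/2 \<le> measure M {\<omega> \<in> space M. \<bar>X \<omega> + Y \<omega> - m\<bar> \<le> t}}"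
  have sub: "S2 \<subseteq> S1" unfolding S1_def S2_def using key order_trans by blast
  have bdd: "bdd_below S1"
  proof (rule bdd_belowI)
    fix t assume "t \<in> S1"
    show "0 \<le> t"
    proof (rule ccontr)
      assume "\<not> 0 \<le> t"
      then have "{\<omega> \<in> space M. \<bar>X \<omega> - c\<bar> \<le> t} = {}" by auto
      then show False using \<open>t \<in> S1\<close> unfolding S1_def by (simp del: Collect_empty_eq)
    qed
  qed
  have ne: "S2 \<noteq> {}"
  proof -
    define A where "A n = {\<omega> \<in> space M. \<bar>X \<omega> + Y \<omega> - m\<bar> \<le> real n}" for n
    have "(\<lambda>n. measure M (A n)) \<longlonglongrightarrow> measure M (\<Union>n. A n)"
      by (rule finite_Lim_measure_incseq) (auto simp: A_def incseq_def)
    moreover have "(\<Union>n. A n) = space M"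
      by (auto simp: A_def) (meson real_arch_simple)
    ultimately have "(\<lambda>n. measure M (A n)) \<longlonglongrightarrow> 1" by (simp add: prob_space)
    then have "eventually (\<lambda>n. 1/2 < measure M (A n)) sequentially"
      by (rule order_tendstoD(1)) simp
    then obtain n where "1/2 < measure M (A n)" by (auto simp: eventually_sequentially)
    then have "real n \<in> S2" by (auto simp: S2_def A_def)
    then show ?thesis by blast
  qed
  have "MAD M X = Inf S1"
    by (simp only: MAD_def med_X[OF assms(1) assms(5) assms(6)]) (simp add: med_def S1_def)
  also have "\<dots> \<le> Inf S2" by (rule cInf_superset_mono[OF ne bdd sub])
  also have "Inf S2 = MAD M (\<lambda>\<omega>. X \<omega> + Y \<omega>)"
    unfolding MAD_def S2_def m_def med_def by simp
  finally show ?thesis .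
qed

end
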